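(* Let $n\ge2$ and $\boldsymbol{\lambda}=(\lambda_1,\dots,\lambda_n)$ a vector of positive integers. For every minimal generator $(a_1,\dots,a_n,d)$ of $M(\boldsymbol{\lambda})$ we have $d<n$.
   Context: $M(\boldsymbol{\lambda})=\{(a_1,\dots,a_n,d)\in\mathbb{N}^{n+1}\mid a_1/\lambda_1+\cdots+a_n/\lambda_n\ge d\}$. A minimal generator of $M(\boldsymbol{\lambda})$ is a nonzero element that cannot be written as the sum of two nonzero elements of $M(\boldsymbol{\lambda})$. *)

theory Defs
  imports Complex_Main
begin

definition Mlam :: "nat list \<Rightarrow> (nat list \<times> nat) set" where
  "Mlam lam = {(a, d). length a = length lam \<and>
      (\<Sum>i<length lam. real (a ! i) / real (lam ! i)) \<ge> real d}"

definition elem_add :: "nat list \<times> nat \<Rightarrow> nat list \<times> nat \<Rightarrow> nat list \<times> nat" where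
  "elem_add x y = (map2 (+) (fst x) (fst y), snd x + snd y)"

definition elem_zero :: "nat \<Rightarrow> nat list \<times> nat" where
  "elem_zero n = (replicate n 0, 0)"

definition minimal_generator :: "nat list \<Rightarrow> nat list \<times> nat \<Rightarrow> bool" where
  "minimal_generator lam x \<longleftrightarrow>
     x \<in> Mlam lam \<and> x \<noteq> elem_zero (length lam) \<and>
     \<not> (\<exists>y\<in>Mlam lam. \<exists>z\<in>Mlam lam.
           y \<noteq> elem_zero (length lam) \<and> z \<noteq> elem_zero (length lam) \<and> x = elem_add y z)"

end

theory Submission
  imports Defs
begin

theorem corollary5p5:
  fixes lam :: "nat list" and n :: nat and a :: "nat list" and d :: nat
  assumes "length lam = n" and "n \<ge> 2"
    and "\<forall>i<n. lam ! i > 0"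
    and "minimal_generator lam (a, d)"
  shows "d < n"
proof (rule ccontr)
  assume "\<not> d < n"
  hence dn: "d \<ge> n" by simp
  have mem: "(a, d) \<in> Mlam lam" using assms(4) unfolding minimal_generator_def by blast
  hence la: "length a = n" and s: "(\<Sum>i<n. real (a ! i) / real (lam ! i)) \<ge> real d"
    using assms(1) unfolding Mlam_def by auto
  have "\<exists>j<n. a ! j \<ge> lam ! j"
  proof (rule ccontr)
    assume "\<not> ?thesis"
    hence "\<forall>i<n. real (a ! i) / real (lam ! i) < 1" using assms(3) by auto
    hence "(\<Sum>i<n. real (a ! i) / real (lam ! i)) < (\<Sum>i<n. 1)"
      using assms(2) by (intro sum_strict_mono) (auto simp: lessThan_empty_iff)
    thus False using s dn by simp
  qed
  then obtain j where j: "j < n" "a ! j \<ge> lam ! j" by blast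
  define yb where "yb = (replicate n 0)[j := lam ! j]"
  define zb where "zb = a[j := a ! j - lam ! j]"
  have lyb: "length yb = n" and lzb: "length zb = n" using la by (auto simp: yb_def zb_def)
  have yi: "real (yb ! i) = (if i = j then real (lam ! j) else 0)" if "i < n" for i
    using that j by (simp add: yb_def nth_list_update)
  have zi: "real (zb ! i) = real (a ! i) - (if i = j then real (lam ! j) else 0)" if "i < n" for i
    using that j la by (auto simp: zb_def nth_list_update of_nat_diff)
  have ljpos: "real (lam ! j) > 0" using assms(3) j by auto
  have sy: "(\<Sum>i<n. real (yb ! i) / real (lam ! i)) = 1"
  proof -
    have "(\<Sum>i<n. real (yb ! i) / real (lam ! i)) = (\<Sum>i<n. if i = j then 1 else 0)"
      using ljpos by (intro sum.cong) (auto simp: yi)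
    thus ?thesis using j by simp
  qed
  have sz: "(\<Sum>i<n. real (zb ! i) / real (lam ! i)) = (\<Sum>i<n. real (a ! i) / real (lam ! i)) - 1"
  proof -
    have "(\<Sum>i<n. real (zb ! i) / real (lam ! i)) = (\<Sum>i<n. real (a ! i) / real (lam ! i) - (if i = j then 1 else 0))"
      using ljpos by (intro sum.cong) (auto simp: zi diff_divide_distrib)
    also have "\<dots> = (\<Sum>i<n. real (a ! i) / real (lam ! i)) - 1"
      using j by (simp add: sum_subtractf)
    finally show ?thesis .
  qed
  have ym: "(yb, 1) \<in> Mlam lam" using sy lyb assms(1) unfolding Mlam_def by auto
  have zm: "(zb, d - 1) \<in> Mlam lam" using sz lzb assms(1) s dn assms(2) unfolding Mlam_def
    by (auto simp: of_nat_diff)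
  have yn: "(yb, 1) \<noteq> elem_zero (length lam)" by (simp add: elem_zero_def)
  have zn: "(zb, d - 1) \<noteq> elem_zero (length lam)" using dn assms(2) by (simp add: elem_zero_def)
  have "map2 (+) yb zb = a"
  proof (rule nth_equalityI)
    show "length (map2 (+) yb zb) = length a" using lyb lzb la by simp
    fix i assume "i < length (map2 (+) yb zb)"
    hence i: "i < n" using lyb lzb by simp
    show "map2 (+) yb zb ! i = a ! i"
      using i j la lyb lzb by (auto simp: yb_def zb_def nth_list_update)
  qed
  hence "(a, d) = elem_add (yb, 1) (zb, d - 1)" using dn assms(2) by (simp add: elem_add_def)
  thus False using assms(4) ym zm yn zn unfolding minimal_generator_def by blast
qed

end
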